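(* For any two randomized policies $\boldsymbol\theta,\boldsymbol\theta'\in\boldsymbol\Theta$, $$J^{\boldsymbol\theta'}_{\mu,\sigma}-J^{\boldsymbol\theta}_{\mu,\sigma}=\sum_{i\in\mathcal S}\pi^{\boldsymbol\theta'}(i)\sum_{a\in\mathcal A}(\theta'_{i,a}-\theta_{i,a})\Big\{\sum_{j\in\mathcal S}p^a(i,j)g^{\boldsymbol\theta}(j)+r(i,a)-\beta r(i,a)^2+2\beta J^{\boldsymbol\theta}_\mu r(i,a)\Big\}+\beta\big(J^{\boldsymbol\theta'}_\mu-J^{\boldsymbol\theta}_\mu\big)^2 .$$
   Context: Let $\mathcal S=\{1,\dots,S\}$ be a finite state space and $\mathcal A$ a finite action set, with transition probabilities $p^a(i,j)\ge0$ ($\sum_j p^a(i,j)=1$) and rewards $r(i,a)\in\mathbb R$. Standing assumption: for every deterministic map $d:\mathcal S\to\mathcal A$, the matrix with entries $p^{d(i)}(i,j)$ is irreducible. The randomized policy space is $\boldsymbol\Theta=\{\boldsymbol\theta=(\theta_{i,a})_{i\in\mathcal S,a\in\mathcal A}:\theta_{i,a}\ge0,\ \sum_a\theta_{i,a}=1\ \forall i\}$, where $\theta_{i,a}$ is the probability of choosing action $a$ in state $i$. Under $\boldsymbol\theta$ the transition matrix is $P^{\boldsymbol\theta}(i,j)=\sum_a p^a(i,j)\theta_{i,a}$; it is irreducible (by the standing assumption) with unique stationary distribution $\boldsymbol\pi^{\boldsymbol\theta}$ having positive entries. The mean is $J^{\boldsymbol\theta}_\mu=\sum_i\pi^{\boldsymbol\theta}(i)\sum_a\theta_{i,a}r(i,a)$;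 for fixed $\beta>0$ the cost is $f^{\boldsymbol\theta}(i)=\sum_a\theta_{i,a}[r(i,a)-\beta(r(i,a)-J^{\boldsymbol\theta}_\mu)^2]$ and the mean-variance combined metric is $J^{\boldsymbol\theta}_{\mu,\sigma}=\sum_i\pi^{\boldsymbol\theta}(i)f^{\boldsymbol\theta}(i)$. The potential $\mathbf g^{\boldsymbol\theta}$ is any solution of $\mathbf g^{\boldsymbol\theta}=\mathbf f^{\boldsymbol\theta}-J^{\boldsymbol\theta}_{\mu,\sigma}\mathbf 1+P^{\boldsymbol\theta}\mathbf g^{\boldsymbol\theta}$ (unique up to adding a constant vector). *)

theory Defs
  imports Main "HOL-Library.Transitive_Closure_Table" Complex_Main
begin

text \<open>States: finite type 's; actions: finite type 'a.
  Transition kernel p a i j = p^a(i,j); rewards r i a.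
  Randomized policy theta i a = probability of action a in state i.\<close>

definition is_kernel :: "('a::finite \<Rightarrow> 's::finite \<Rightarrow> 's \<Rightarrow> real) \<Rightarrow> bool" where
  "is_kernel p \<longleftrightarrow> (\<forall>a i j. p a i j \<ge> 0) \<and> (\<forall>a i. (\<Sum>j\<in>UNIV. p a i j) = 1)"

definition irreducible_mat :: "('s::finite \<Rightarrow> 's \<Rightarrow> real) \<Rightarrow> bool" where
  "irreducible_mat P \<longleftrightarrow> (\<forall>i j. (i, j) \<in> {(x, y). P x y > 0}\<^sup>*)"

definition policies :: "('s::finite \<Rightarrow> 'a::finite \<Rightarrow> real) set" where
  "policies = {\<theta>. (\<forall>i a. \<theta> i a \<ge> 0) \<and> (\<forall>i. (\<Sum>a\<in>UNIV. \<theta> i a) = 1)}"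

definition Pmat :: "('a::finite \<Rightarrow> 's::finite \<Rightarrow> 's \<Rightarrow> real) \<Rightarrow> ('s \<Rightarrow> 'a \<Rightarrow> real) \<Rightarrow> 's \<Rightarrow> 's \<Rightarrow> real" where
  "Pmat p \<theta> i j = (\<Sum>a\<in>UNIV. p a i j * \<theta> i a)"

definition stationary :: "('s::finite \<Rightarrow> 's \<Rightarrow> real) \<Rightarrow> ('s \<Rightarrow> real) \<Rightarrow> bool" where
  "stationary P \<pi> \<longleftrightarrow> (\<forall>i. \<pi> i \<ge> 0) \<and> (\<Sum>i\<in>UNIV. \<pi> i) = 1 \<and>
     (\<forall>j. (\<Sum>i\<in>UNIV. \<pi> i * P i j) = \<pi> j)"

text \<open>The (unique, under irreducibility) stationary distribution.\<close>
definition stat_dist :: "('s::finite \<Rightarrow> 's \<Rightarrow> real) \<Rightarrow> 's \<Rightarrow> real" where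
  "stat_dist P = (THE \<pi>. stationary P \<pi>)"

definition pi_pol :: "('a::finite \<Rightarrow> 's::finite \<Rightarrow> 's \<Rightarrow> real) \<Rightarrow> ('s \<Rightarrow> 'a \<Rightarrow> real) \<Rightarrow> 's \<Rightarrow> real" where
  "pi_pol p \<theta> = stat_dist (Pmat p \<theta>)"

definition J_mu :: "('a::finite \<Rightarrow> 's::finite \<Rightarrow> 's \<Rightarrow> real) \<Rightarrow> ('s \<Rightarrow> 'a \<Rightarrow> real) \<Rightarrow> ('s \<Rightarrow> 'a \<Rightarrow> real) \<Rightarrow> real" where
  "J_mu p r \<theta> = (\<Sum>i\<in>UNIV. pi_pol p \<theta> i * (\<Sum>a\<in>UNIV. \<theta> i a * r i a))"

definition f_cost :: "real \<Rightarrow> ('a::finite \<Rightarrow> 's::finite \<Rightarrow> 's \<Rightarrow> real) \<Rightarrow> ('s \<Rightarrow> 'a \<Rightarrow> real) \<Rightarrow> ('s \<Rightarrow> 'a \<Rightarrow> real) \<Rightarrow> 's \<Rightarrow> real" where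
  "f_cost \<beta> p r \<theta> i = (\<Sum>a\<in>UNIV. \<theta> i a * (r i a - \<beta> * (r i a - J_mu p r \<theta>)\<^sup>2))"

definition J_mv :: "real \<Rightarrow> ('a::finite \<Rightarrow> 's::finite \<Rightarrow> 's \<Rightarrow> real) \<Rightarrow> ('s \<Rightarrow> 'a \<Rightarrow> real) \<Rightarrow> ('s \<Rightarrow> 'a \<Rightarrow> real) \<Rightarrow> real" where
  "J_mv \<beta> p r \<theta> = (\<Sum>i\<in>UNIV. pi_pol p \<theta> i * f_cost \<beta> p r \<theta> i)"

definition is_potential :: "real \<Rightarrow> ('a::finite \<Rightarrow> 's::finite \<Rightarrow> 's \<Rightarrow> real) \<Rightarrow> ('s \<Rightarrow> 'a \<Rightarrow> real) \<Rightarrow> ('s \<Rightarrow> 'a \<Rightarrow> real) \<Rightarrow> ('s \<Rightarrow> real) \<Rightarrow> bool" where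
  "is_potential \<beta> p r \<theta> g \<longleftrightarrow>
     (\<forall>i. g i = f_cost \<beta> p r \<theta> i - J_mv \<beta> p r \<theta> + (\<Sum>j\<in>UNIV. Pmat p \<theta> i j * g j))"

end

theory Submission
  imports Defs "HOL-Analysis.Analysis"
begin


lemma abs_stat:
  fixes P :: "'s::finite \<Rightarrow> 's \<Rightarrow> real"
  assumes nn: "\<forall>i j. P i j \<ge> 0" and rs: "\<forall>i. (\<Sum>j\<in>UNIV. P i j) = 1"
    and v: "\<forall>j. (\<Sum>i\<in>UNIV. v i * P i j) = v j"
  shows "(\<Sum>i\<in>UNIV. \<bar>v i\<bar> * P i j) = \<bar>v j\<bar>"
proof -
  have le: "\<bar>v k\<bar> \<le> (\<Sum>i\<in>UNIV. \<bar>v i\<bar> * P i k)" for k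
  proof -
    have "\<bar>v k\<bar> = \<bar>\<Sum>i\<in>UNIV. v i * P i k\<bar>" using v by simp
    also have "\<dots> \<le> (\<Sum>i\<in>UNIV. \<bar>v i * P i k\<bar>)" by (rule sum_abs)
    also have "\<dots> = (\<Sum>i\<in>UNIV. \<bar>v i\<bar> * P i k)" using nn by (simp add: abs_mult)
    finally show ?thesis .
  qed
  have "(\<Sum>k\<in>UNIV. \<Sum>i\<in>UNIV. \<bar>v i\<bar> * P i k) = (\<Sum>i\<in>UNIV. \<bar>v i\<bar> * (\<Sum>k\<in>UNIV. P i k))"
    unfolding sum_distrib_left by (rule sum.swap)
  also have "\<dots> = (\<Sum>k\<in>UNIV. \<bar>v k\<bar>)" using rs by simp
  finally have eq: "(\<Sum>k\<in>UNIV. \<bar>v k\<bar>) = (\<Sum>k\<in>UNIV. \<Sum>i\<in>UNIV. \<bar>v i\<bar> * P i k)" by simp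
  show ?thesis using sum_mono_inv[OF eq, of j] le by simp
qed

lemma pos_prop:
  fixes P :: "'s::finite \<Rightarrow> 's \<Rightarrow> real"
  assumes nn: "\<forall>i j. P i j \<ge> 0" and irr: "irreducible_mat P"
    and u0: "\<forall>i. u i \<ge> 0" and u: "\<forall>j. (\<Sum>i\<in>UNIV. u i * P i j) = u j"
    and ui: "u i > 0"
  shows "u j > 0"
proof -
  have "(i, j) \<in> {(x, y). P x y > 0}\<^sup>*" using irr unfolding irreducible_mat_def by blast
  then show ?thesis
  proof (induction rule: rtrancl_induct)
    case base then show ?case using ui .
  next
    case (step y z)
    have "u y * P y z > 0" using step by simp
    also have "u y * P y z \<le> (\<Sum>k\<in>UNIV. u k * P k z)"
      by (rule member_le_sum) (use nn u0 in auto)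
    also have "\<dots> = u z" using u by simp
    finally show ?case .
  qed
qed

lemma uniq_le:
  fixes P :: "'s::finite \<Rightarrow> 's \<Rightarrow> real"
  assumes nn: "\<forall>i j. P i j \<ge> 0" and rs: "\<forall>i. (\<Sum>j\<in>UNIV. P i j) = 1" and irr: "irreducible_mat P"
    and s1: "stationary P \<pi>" and s2: "stationary P \<sigma>"
  shows "\<pi> j \<le> \<sigma> j"
proof (rule ccontr)
  assume c: "\<not> \<pi> j \<le> \<sigma> j"
  define w where "w i = \<pi> i - \<sigma> i" for i
  have w: "\<forall>j. (\<Sum>i\<in>UNIV. w i * P i j) = w j"
    using s1 s2 unfolding stationary_def w_def by (simp add: left_diff_distrib sum_subtractf)
  have aw: "\<forall>j. (\<Sum>i\<in>UNIV. \<bar>w i\<bar> * P i j) = \<bar>w j\<bar>" using abs_stat[OF nn rs w] by blast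
  define u where "u i = (\<bar>w i\<bar> + w i) / 2" for i
  have u: "\<forall>j. (\<Sum>i\<in>UNIV. u i * P i j) = u j"
    using w aw unfolding u_def by (simp add: add_divide_distrib sum_divide_distrib[symmetric] distrib_right sum.distrib)
  have u0: "\<forall>i. u i \<ge> 0" unfolding u_def by auto
  have "u j > 0" using c unfolding u_def w_def by auto
  then have "\<forall>k. u k > 0" using pos_prop[OF nn irr u0 u] by blast
  then have "\<forall>k. w k > 0" unfolding u_def by (metis abs_of_nonpos add.commute add.right_inverse half_gt_zero_iff linorder_not_le order_less_irrefl)
  then have "(\<Sum>k\<in>UNIV. w k) > 0" by (simp add: sum_pos)
  moreover have "(\<Sum>k\<in>UNIV. w k) = 0" using s1 s2 unfolding stationary_def w_def by (simp add: sum_subtractf)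
  ultimately show False by simp
qed

lemma exists_stat:
  fixes P :: "'s::finite \<Rightarrow> 's \<Rightarrow> real"
  assumes nn: "\<forall>i j. P i j \<ge> 0" and rs: "\<forall>i. (\<Sum>j\<in>UNIV. P i j) = 1"
  shows "\<exists>\<pi>. stationary P \<pi>"
proof -
  define L :: "real^'s \<Rightarrow> real^'s" where "L v = (\<chi> j. (\<Sum>i\<in>UNIV. v$i * P i j) - v$j)" for v
  have lin: "linear L"
    unfolding L_def by (rule linearI) (auto simp: vec_eq_iff algebra_simps sum.distrib sum_distrib_left)
  have img: "(\<Sum>j\<in>UNIV. L v $ j) = 0" for v
  proof -
    have "(\<Sum>j\<in>UNIV. \<Sum>i\<in>UNIV. v$i * P i j) = (\<Sum>i\<in>UNIV. v$i * (\<Sum>j\<in>UNIV. P i j))"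
      unfolding sum_distrib_left by (rule sum.swap)
    then show ?thesis unfolding L_def using rs by (simp add: sum_subtractf)
  qed
  have "\<not> surj L"
  proof
    assume "surj L"
    then obtain v where "L v = (\<chi> j. 1)" by (metis surjD)
    then have "(\<Sum>j\<in>UNIV. L v $ j) = of_nat CARD('s)" by simp
    with img show False by simp
  qed
  then have "\<not> inj L" using linear_injective_imp_surjective[OF lin] by blast
  then obtain v where v0: "v \<noteq> 0" and Lv: "L v = 0" using linear_injective_0[OF lin] by blast
  have v: "\<forall>j. (\<Sum>i\<in>UNIV. v$i * P i j) = v$j" using Lv unfolding L_def by (simp add: vec_eq_iff)
  have av: "\<forall>j. (\<Sum>i\<in>UNIV. \<bar>v$i\<bar> * P i j) = \<bar>v$j\<bar>" using abs_stat[OF nn rs, of "\<lambda>i. v$i"] v by blast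
  define s where "s = (\<Sum>i\<in>UNIV. \<bar>v$i\<bar>)"
  obtain k where "v$k \<noteq> 0" using v0 by (metis vec_eq_iff zero_index)
  then have "s > 0" unfolding s_def by (intro sum_pos2[where i=k]) auto
  define \<pi> where "\<pi> i = \<bar>v$i\<bar> / s" for i
  have "stationary P \<pi>"
    unfolding stationary_def \<pi>_def
    using \<open>s > 0\<close> av by (auto simp: sum_divide_distrib[symmetric] s_def)
  then show ?thesis by blast
qed


lemma pol_facts:
  fixes p :: "'a::finite \<Rightarrow> 's::finite \<Rightarrow> 's \<Rightarrow> real" and \<theta> :: "'s \<Rightarrow> 'a \<Rightarrow> real"
  assumes kernel: "is_kernel p"
    and irred: "\<And>d :: 's \<Rightarrow> 'a. irreducible_mat (\<lambda>i j. p (d i) i j)"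
    and th: "\<theta> \<in> policies"
  shows "stationary (Pmat p \<theta>) (pi_pol p \<theta>)"
proof -
  let ?P = "Pmat p \<theta>"
  have pn: "\<forall>a i j. p a i j \<ge> 0" and ps: "\<forall>a i. (\<Sum>j\<in>UNIV. p a i j) = 1"
    using kernel unfolding is_kernel_def by auto
  have tn: "\<forall>i a. \<theta> i a \<ge> 0" and ts: "\<forall>i. (\<Sum>a\<in>UNIV. \<theta> i a) = 1"
    using th unfolding policies_def by auto
  have nn: "\<forall>i j. ?P i j \<ge> 0" unfolding Pmat_def using pn tn by (auto intro: sum_nonneg)
  have rs: "\<forall>i. (\<Sum>j\<in>UNIV. ?P i j) = 1"
  proof
    fix i
    have "(\<Sum>j\<in>UNIV. ?P i j) = (\<Sum>a\<in>UNIV. \<theta> i a * (\<Sum>j\<in>UNIV. p a i j))"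
      unfolding Pmat_def sum_distrib_left by (subst sum.swap) (simp add: mult.commute)
    then show "(\<Sum>j\<in>UNIV. ?P i j) = 1" using ps ts by simp
  qed
  have ex: "\<exists>a. \<theta> i a > 0" for i
  proof (rule ccontr)
    assume "\<not> ?thesis"
    then have "\<forall>a. \<theta> i a = 0" using tn by (metis less_eq_real_def)
    then have "(\<Sum>a\<in>UNIV. \<theta> i a) = 0" by simp
    then show False using ts by simp
  qed
  define d where "d i = (SOME a. \<theta> i a > 0)" for i
  have dpos: "\<theta> i (d i) > 0" for i unfolding d_def using ex by (metis someI_ex)
  have irr: "irreducible_mat ?P"
    unfolding irreducible_mat_def
  proof (intro allI)
    fix i j
    have "(i, j) \<in> {(x, y). p (d x) x y > 0}\<^sup>*" using irred[of d] unfolding irreducible_mat_def by blast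
    moreover have "{(x, y). p (d x) x y > 0} \<subseteq> {(x, y). ?P x y > 0}"
    proof clarify
      fix x y assume h: "p (d x) x y > 0"
      have "0 < p (d x) x y * \<theta> x (d x)" using h dpos by simp
      also have "\<dots> \<le> ?P x y" unfolding Pmat_def
        by (rule member_le_sum[where f = "\<lambda>a. p a x y * \<theta> x a"]) (use pn tn in auto)
      finally show "?P x y > 0" .
    qed
    ultimately show "(i, j) \<in> {(x, y). ?P x y > 0}\<^sup>*" using rtrancl_mono by blast
  qed
  have "\<exists>!\<pi>. stationary ?P \<pi>"
  proof -
    obtain \<pi> where "stationary ?P \<pi>" using exists_stat[OF nn rs] by blast
    moreover have "\<sigma> = \<pi>" if "stationary ?P \<sigma>" for \<sigma>
      using uniq_le[OF nn rs irr that \<open>stationary ?P \<pi>\<close>] uniq_le[OF nn rs irr \<open>stationary ?P \<pi>\<close> that]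
      by (intro ext antisym) auto
    ultimately show ?thesis by blast
  qed
  then show ?thesis unfolding pi_pol_def stat_dist_def by (rule theI')
qed


theorem mainTheorem7:
  fixes p :: "'a::finite \<Rightarrow> 's::finite \<Rightarrow> 's \<Rightarrow> real"
    and r :: "'s \<Rightarrow> 'a \<Rightarrow> real"
    and \<beta> :: real
    and \<theta> \<theta>' :: "'s \<Rightarrow> 'a \<Rightarrow> real"
    and g :: "'s \<Rightarrow> real"
  assumes kernel: "is_kernel p"
    and irred: "\<And>d :: 's \<Rightarrow> 'a. irreducible_mat (\<lambda>i j. p (d i) i j)"
    and beta_pos: "\<beta> > 0"
    and th: "\<theta> \<in> policies"
    and th': "\<theta>' \<in> policies"
    and pot: "is_potential \<beta> p r \<theta> g"
  shows "J_mv \<beta> p r \<theta>' - J_mv \<beta> p r \<theta> =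
    (\<Sum>i\<in>UNIV. pi_pol p \<theta>' i * (\<Sum>a\<in>UNIV. (\<theta>' i a - \<theta> i a) *
        ((\<Sum>j\<in>UNIV. p a i j * g j) + r i a - \<beta> * (r i a)\<^sup>2 + 2 * \<beta> * J_mu p r \<theta> * r i a)))
    + \<beta> * (J_mu p r \<theta>' - J_mu p r \<theta>)\<^sup>2"
proof -
  define \<pi> where "\<pi> = pi_pol p \<theta>'"
  define Jm where "Jm = J_mu p r \<theta>"
  define Jm' where "Jm' = J_mu p r \<theta>'"
  define J where "J = J_mv \<beta> p r \<theta>"
  define f where "f = f_cost \<beta> p r \<theta>"
  define Q where "Q i = (\<Sum>j\<in>UNIV. Pmat p \<theta>' i j * g j)" for i
  define R where "R i = (\<Sum>a\<in>UNIV. \<theta>' i a * r i a)" for i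
  define T where "T i = (\<Sum>a\<in>UNIV. \<theta>' i a * (r i a - \<beta> * (r i a)\<^sup>2))" for i
  have st: "stationary (Pmat p \<theta>') \<pi>" unfolding \<pi>_def by (rule pol_facts[OF kernel irred th'])
  have ts: "\<forall>i. (\<Sum>a\<in>UNIV. \<theta> i a) = 1" using th unfolding policies_def by auto
  have ts': "\<forall>i. (\<Sum>a\<in>UNIV. \<theta>' i a) = 1" using th' unfolding policies_def by auto
  have s1: "(\<Sum>i\<in>UNIV. \<pi> i) = 1" and sP: "\<And>j. (\<Sum>i\<in>UNIV. \<pi> i * Pmat p \<theta>' i j) = \<pi> j"
    using st unfolding stationary_def by auto
  have Jm': "Jm' = (\<Sum>i\<in>UNIV. \<pi> i * R i)" unfolding Jm'_def J_mu_def \<pi>_def R_def ..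
  have swapP: "(\<Sum>a\<in>UNIV. \<phi> i a * (\<Sum>j\<in>UNIV. p a i j * g j)) = (\<Sum>j\<in>UNIV. Pmat p \<phi> i j * g j)"
    for \<phi> :: "'s \<Rightarrow> 'a \<Rightarrow> real" and i
    unfolding Pmat_def sum_distrib_left sum_distrib_right by (subst sum.swap) (simp add: ac_simps)
  have per_i: "(\<Sum>a\<in>UNIV. (\<theta>' i a - \<theta> i a) *
        ((\<Sum>j\<in>UNIV. p a i j * g j) + r i a - \<beta> * (r i a)\<^sup>2 + 2 * \<beta> * Jm * r i a))
     = Q i - g i - J + T i + 2 * \<beta> * Jm * R i - \<beta> * Jm\<^sup>2" for i
  proof -
    define Pg where "Pg a = (\<Sum>j\<in>UNIV. p a i j * g j)" for a
    define h where "h a = r i a - \<beta> * (r i a)\<^sup>2 + 2 * \<beta> * Jm * r i a" for a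
    have "(\<Sum>a\<in>UNIV. (\<theta>' i a - \<theta> i a) * ((\<Sum>j\<in>UNIV. p a i j * g j) + r i a - \<beta> * (r i a)\<^sup>2 + 2 * \<beta> * Jm * r i a))
      = (\<Sum>a\<in>UNIV. \<theta>' i a * Pg a + \<theta>' i a * h a - \<theta> i a * Pg a - \<theta> i a * h a)"
      unfolding Pg_def h_def by (intro sum.cong) (auto simp: algebra_simps)
    also have "\<dots> = (\<Sum>a\<in>UNIV. \<theta>' i a * Pg a) + (\<Sum>a\<in>UNIV. \<theta>' i a * h a) - (\<Sum>a\<in>UNIV. \<theta> i a * Pg a) - (\<Sum>a\<in>UNIV. \<theta> i a * h a)"
      by (simp add: sum.distrib sum_subtractf)
    also have "(\<Sum>a\<in>UNIV. \<theta>' i a * Pg a) = Q i" unfolding Pg_def Q_def by (rule swapP)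
    also have "(\<Sum>a\<in>UNIV. \<theta> i a * Pg a) = g i - f i + J"
    proof -
      have e: "g i = f_cost \<beta> p r \<theta> i - J_mv \<beta> p r \<theta> + (\<Sum>j\<in>UNIV. Pmat p \<theta> i j * g j)"
        using pot unfolding is_potential_def by blast
      show ?thesis unfolding Pg_def swapP f_def J_def using e by linarith
    qed
    also have "(\<Sum>a\<in>UNIV. \<theta>' i a * h a) = T i + 2 * \<beta> * Jm * R i"
    proof -
      have "(\<Sum>a\<in>UNIV. \<theta>' i a * h a) = (\<Sum>a\<in>UNIV. \<theta>' i a * (r i a - \<beta> * (r i a)\<^sup>2) + 2 * \<beta> * Jm * (\<theta>' i a * r i a))"
        unfolding h_def by (intro sum.cong) (auto simp: algebra_simps)
      then show ?thesis unfolding T_def R_def by (simp add: sum.distrib sum_distrib_left)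
    qed
    also have "(\<Sum>a\<in>UNIV. \<theta> i a * h a) = f i + \<beta> * Jm\<^sup>2"
    proof -
      have "f i = (\<Sum>a\<in>UNIV. \<theta> i a * h a - \<beta> * Jm\<^sup>2 * \<theta> i a)"
        unfolding f_def f_cost_def h_def Jm_def by (intro sum.cong) (auto simp: power2_eq_square algebra_simps)
      also have "\<dots> = (\<Sum>a\<in>UNIV. \<theta> i a * h a) - \<beta> * Jm\<^sup>2"
        using ts by (simp add: sum_subtractf sum_distrib_left[symmetric])
      finally show ?thesis by simp
    qed
    finally show ?thesis by simp
  qed
  have QS: "(\<Sum>i\<in>UNIV. \<pi> i * Q i) = (\<Sum>i\<in>UNIV. \<pi> i * g i)"
  proof -
    have "(\<Sum>i\<in>UNIV. \<pi> i * Q i) = (\<Sum>j\<in>UNIV. (\<Sum>i\<in>UNIV. \<pi> i * Pmat p \<theta>' i j) * g j)"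
      unfolding Q_def sum_distrib_left sum_distrib_right by (subst sum.swap) (simp add: mult.assoc)
    then show ?thesis using sP by simp
  qed
  have fJ': "J_mv \<beta> p r \<theta>' = (\<Sum>i\<in>UNIV. \<pi> i * T i) + \<beta> * Jm'\<^sup>2"
  proof -
    have fi: "f_cost \<beta> p r \<theta>' i = T i + 2 * \<beta> * Jm' * R i - \<beta> * Jm'\<^sup>2" for i
    proof -
      have "f_cost \<beta> p r \<theta>' i = (\<Sum>a\<in>UNIV. \<theta>' i a * (r i a - \<beta> * (r i a)\<^sup>2) + 2 * \<beta> * Jm' * (\<theta>' i a * r i a) - \<beta> * Jm'\<^sup>2 * \<theta>' i a)"
        unfolding f_cost_def Jm'_def by (rule sum.cong) (auto simp: power2_eq_square algebra_simps)
      also have "\<dots> = T i + 2 * \<beta> * Jm' * R i - \<beta> * Jm'\<^sup>2 * (\<Sum>a\<in>UNIV. \<theta>' i a)"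
        unfolding T_def R_def by (simp add: sum.distrib sum_subtractf sum_distrib_left)
      finally show ?thesis using ts' by simp
    qed
    have "J_mv \<beta> p r \<theta>' = (\<Sum>i\<in>UNIV. \<pi> i * T i + 2 * \<beta> * Jm' * (\<pi> i * R i) - \<beta> * Jm'\<^sup>2 * \<pi> i)"
      unfolding J_mv_def \<pi>_def[symmetric] fi by (intro sum.cong) (auto simp: algebra_simps)
    also have "\<dots> = (\<Sum>i\<in>UNIV. \<pi> i * T i) + 2 * \<beta> * Jm' * Jm' - \<beta> * Jm'\<^sup>2"
      using s1 by (simp add: sum.distrib sum_subtractf sum_distrib_left[symmetric] Jm')
    finally show ?thesis by (simp add: power2_eq_square)
  qed
  have rhs: "(\<Sum>i\<in>UNIV. \<pi> i * (Q i - g i - J + T i + 2 * \<beta> * Jm * R i - \<beta> * Jm\<^sup>2))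
     = (\<Sum>i\<in>UNIV. \<pi> i * Q i) - (\<Sum>i\<in>UNIV. \<pi> i * g i) - J + (\<Sum>i\<in>UNIV. \<pi> i * T i) + 2 * \<beta> * Jm * Jm' - \<beta> * Jm\<^sup>2"
  proof -
    have "(\<Sum>i\<in>UNIV. \<pi> i * (Q i - g i - J + T i + 2 * \<beta> * Jm * R i - \<beta> * Jm\<^sup>2))
      = (\<Sum>i\<in>UNIV. \<pi> i * Q i - \<pi> i * g i - J * \<pi> i + \<pi> i * T i + 2 * \<beta> * Jm * (\<pi> i * R i) - \<beta> * Jm\<^sup>2 * \<pi> i)"
      by (intro sum.cong) (auto simp: algebra_simps)
    also have "\<dots> = (\<Sum>i\<in>UNIV. \<pi> i * Q i) - (\<Sum>i\<in>UNIV. \<pi> i * g i) - J * (\<Sum>i\<in>UNIV. \<pi> i) + (\<Sum>i\<in>UNIV. \<pi> i * T i) + 2 * \<beta> * Jm * (\<Sum>i\<in>UNIV. \<pi> i * R i) - \<beta> * Jm\<^sup>2 * (\<Sum>i\<in>UNIV. \<pi> i)"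
      by (simp add: sum.distrib sum_subtractf sum_distrib_left)
    finally show ?thesis using s1 Jm' by simp
  qed
  show ?thesis
    unfolding \<pi>_def[symmetric] Jm_def[symmetric] Jm'_def[symmetric] J_def[symmetric] per_i rhs QS fJ'
    by (simp add: power2_eq_square algebra_simps)
qed

end
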